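(* For each $p\ge1$ let $\theta=\theta^{(p)},w=w^{(p)}\in\mathbb{R}^p$ (possibly random), $\eta=\theta+w$, and let $\hat\nu=\hat\nu_p$ be an estimator. Suppose there are constants $m\in\mathbb{R}$ and $\nu,\xi\in(0,\infty)$ such that, as $p\to\infty$ (almost surely in the random case): (i) $\bar\theta\to m$ and $\mathrm{var}(\theta)\to\xi^2$; (ii) $\bar w\to0$ and $\mathrm{var}(w)\to\nu^2$; (iii) $\mathrm{cov}(\theta,w)\to0$; (iv) $\hat\nu_p\to\nu$. Let $$\mathrm{SNR}=\frac{\xi}{\nu},\quad r_\infty=\frac1{\sqrt{1+(m/\xi)^2}},\quad c_\infty=\frac{\mathrm{SNR}^2}{1+\mathrm{SNR}^2},\quad d_\infty=c_\infty+\frac{r_\infty^2}{1+\mathrm{SNR}^2}.$$ Let $c=1-\hat\nu^2/\mathrm{var}(\eta)$ and $\eta(c)=\bar\eta+c(\eta-\bar\eta)$. Then $$\mathrm{MSE}_\infty(\eta(c),\theta)=c_\infty\,\mathrm{MSE}_\infty(\eta,\theta)\quad\text{and}\quad \mathrm{SPH}_\infty(\eta(c),\theta)=d_\infty\,\mathrm{SPH}_\infty(\eta,\theta),$$ where the subscript $\infty$ denotes the (almost sure) limit as $p\to\infty$. Moreover, the quantities $c^{\mathrm{MSE}}=\mathrm{cov}(\theta,\eta)/\mathrm{var}(\eta)$ and $c^{\mathrm{SPH}}=(\bar\eta/\bar\theta)\,c^{\mathrm{MSE}}$ converge to $c_\infty$ as $p\to\infty$.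
   Context: For $u,v\in\mathbb{R}^p$: $\bar u=\frac1p\sum_i u_i$, $\mathrm{var}(u)=\frac1p\sum_i(u_i-\bar u)^2$, $\mathrm{cov}(u,v)=\frac1p\sum_i(u_i-\bar u)(v_i-\bar v)$; for $x\in\mathbb{R}$, $u-x$ and $x+u$ are componentwise. $\mathrm{MSE}_p(u,\theta)=\langle u-\theta,u-\theta\rangle/p$ and, for nonzero $u,\theta$, $\mathrm{SPH}_p(u,\theta)=1-\left(\frac{\langle u,\theta\rangle}{|u||\theta|}\right)^2$. The quantities $c^{\mathrm{MSE}}$ and $c^{\mathrm{SPH}}$ are the minimizers over $c$ of $\mathrm{MSE}_p(\eta(c),\theta)$ and $\mathrm{SPH}_p(\eta(c),\theta)$ respectively. *)

theory Defs
  imports "HOL-Analysis.Analysis"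
begin

text \<open>Vectors in R^p are represented as functions nat => real, only the
  coordinates 0..p-1 being relevant.\<close>

definition vmean :: "nat \<Rightarrow> (nat \<Rightarrow> real) \<Rightarrow> real" where
  "vmean p u = (\<Sum>i<p. u i) / real p"

definition vvar :: "nat \<Rightarrow> (nat \<Rightarrow> real) \<Rightarrow> real" where
  "vvar p u = (\<Sum>i<p. (u i - vmean p u)^2) / real p"

definition vcov :: "nat \<Rightarrow> (nat \<Rightarrow> real) \<Rightarrow> (nat \<Rightarrow> real) \<Rightarrow> real" where
  "vcov p u v = (\<Sum>i<p. (u i - vmean p u) * (v i - vmean p v)) / real p"

definition vinner :: "nat \<Rightarrow> (nat \<Rightarrow> real) \<Rightarrow> (nat \<Rightarrow> real) \<Rightarrow> real" where
  "vinner p u v = (\<Sum>i<p. u i * v i)"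

definition vnorm :: "nat \<Rightarrow> (nat \<Rightarrow> real) \<Rightarrow> real" where
  "vnorm p u = sqrt (vinner p u u)"

definition MSE :: "nat \<Rightarrow> (nat \<Rightarrow> real) \<Rightarrow> (nat \<Rightarrow> real) \<Rightarrow> real" where
  "MSE p u \<theta> = vinner p (\<lambda>i. u i - \<theta> i) (\<lambda>i. u i - \<theta> i) / real p"

definition SPH :: "nat \<Rightarrow> (nat \<Rightarrow> real) \<Rightarrow> (nat \<Rightarrow> real) \<Rightarrow> real" where
  "SPH p u \<theta> = 1 - (vinner p u \<theta> / (vnorm p u * vnorm p \<theta>))^2"

definition shrink :: "nat \<Rightarrow> real \<Rightarrow> (nat \<Rightarrow> real) \<Rightarrow> (nat \<Rightarrow> real)" where
  "shrink p c u = (\<lambda>i. vmean p u + c * (u i - vmean p u))"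

definition SNR :: "real \<Rightarrow> real \<Rightarrow> real" where
  "SNR \<xi> \<nu> = \<xi> / \<nu>"

definition r_inf :: "real \<Rightarrow> real \<Rightarrow> real" where
  "r_inf m \<xi> = 1 / sqrt (1 + (m / \<xi>)^2)"

definition c_inf :: "real \<Rightarrow> real \<Rightarrow> real" where
  "c_inf \<xi> \<nu> = (SNR \<xi> \<nu>)^2 / (1 + (SNR \<xi> \<nu>)^2)"

definition d_inf :: "real \<Rightarrow> real \<Rightarrow> real \<Rightarrow> real" where
  "d_inf m \<xi> \<nu> = c_inf \<xi> \<nu> + (r_inf m \<xi>)^2 / (1 + (SNR \<xi> \<nu>)^2)"

end

theory Submission
  imports Defs
begin

lemma vmean_add: "vmean p (\<lambda>i. u i + v i) = vmean p u + vmean p v"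
  by (simp add: vmean_def sum.distrib add_divide_distrib)
lemma vmean_diff: "vmean p (\<lambda>i. u i - v i) = vmean p u - vmean p v"
  by (simp add: vmean_def sum_subtractf diff_divide_distrib)
lemma vmean_affine: "p > 0 \<Longrightarrow> vmean p (\<lambda>i. k + c * u i) = k + c * vmean p u"
  by (simp add: vmean_def sum.distrib sum_distrib_left[symmetric] field_simps)
lemma vcov_add_left: "vcov p (\<lambda>i. u i + v i) z = vcov p u z + vcov p v z"
proof -
  have "(\<Sum>i<p. (u i + v i - vmean p (\<lambda>i. u i + v i)) * (z i - vmean p z))
     = (\<Sum>i<p. (u i - vmean p u) * (z i - vmean p z) + (v i - vmean p v) * (z i - vmean p z))"
    by (intro sum.cong) (auto simp: vmean_add algebra_simps)
  then show ?thesis by (simp add: vcov_def sum.distrib add_divide_distrib)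
qed
lemma vcov_diff_left: "vcov p (\<lambda>i. u i - v i) z = vcov p u z - vcov p v z"
proof -
  have "(\<Sum>i<p. (u i - v i - vmean p (\<lambda>i. u i - v i)) * (z i - vmean p z))
     = (\<Sum>i<p. (u i - vmean p u) * (z i - vmean p z) - (v i - vmean p v) * (z i - vmean p z))"
    by (intro sum.cong) (auto simp: vmean_diff algebra_simps)
  then show ?thesis by (simp add: vcov_def sum_subtractf diff_divide_distrib)
qed
lemma vcov_sym: "vcov p u v = vcov p v u"
  by (simp add: vcov_def mult.commute)
lemma vcov_affine_left: "p > 0 \<Longrightarrow> vcov p (\<lambda>i. k + c * u i) z = c * vcov p u z"
proof -
  assume p: "p > 0"
  have "(\<Sum>i<p. (k + c * u i - vmean p (\<lambda>i. k + c * u i)) * (z i - vmean p z))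
      = (\<Sum>i<p. c * ((u i - vmean p u) * (z i - vmean p z)))"
    using p by (intro sum.cong) (auto simp: vmean_affine algebra_simps)
  then show ?thesis by (simp add: vcov_def sum_distrib_left[symmetric])
qed
lemma vvar_eq: "vvar p u = vcov p u u"
  by (simp add: vvar_def vcov_def power2_eq_square)
lemma vinner_eq: "p > 0 \<Longrightarrow> vinner p u v = real p * (vmean p u * vmean p v + vcov p u v)"
proof -
  assume p: "p > 0"
  have su: "(\<Sum>i<p. u i) = real p * vmean p u" and sv: "(\<Sum>i<p. v i) = real p * vmean p v"
    using p by (auto simp: vmean_def)
  have "(\<Sum>i<p. (u i - vmean p u) * (v i - vmean p v))
     = (\<Sum>i<p. u i * v i) - vmean p v * (\<Sum>i<p. u i) - vmean p u * (\<Sum>i<p. v i) + real p * vmean p u * vmean p v"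
    by (simp add: algebra_simps sum.distrib sum_subtractf sum_distrib_left)
  then show ?thesis using p su sv by (simp add: vcov_def vinner_def field_simps)
qed
lemma shrink_eq: "shrink p c u = (\<lambda>i. (vmean p u - c * vmean p u) + c * u i)"
  by (simp add: shrink_def algebra_simps fun_eq_iff)
lemma vinner_nonneg: "vinner p u u \<ge> 0"
  by (simp add: vinner_def sum_nonneg)
lemma MSE_eq: "p > 0 \<Longrightarrow> MSE p u t = (vmean p u - vmean p t)^2 + vcov p u u - 2 * vcov p u t + vcov p t t"
proof -
  assume p: "p > 0"
  have "vcov p (\<lambda>i. u i - t i) (\<lambda>i. u i - t i) = vcov p u u - 2 * vcov p u t + vcov p t t"
    by (simp add: vcov_diff_left vcov_sym[of p _ "\<lambda>i. u i - t i"] vcov_sym[of p t u])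
  moreover have "MSE p u t = (vmean p u - vmean p t)^2 + vcov p (\<lambda>i. u i - t i) (\<lambda>i. u i - t i)"
    using p by (simp add: MSE_def vinner_eq vmean_diff power2_eq_square)
  ultimately show ?thesis by simp
qed
lemma SPH_eq: "p > 0 \<Longrightarrow> SPH p u t = 1 - (vmean p u * vmean p t + vcov p u t)^2 /
    ((vmean p u * vmean p u + vcov p u u) * (vmean p t * vmean p t + vcov p t t))"
proof -
  assume p: "p > 0"
  have "(vinner p u t / (vnorm p u * vnorm p t))^2 = (vinner p u t)^2 / (vinner p u u * vinner p t t)"
    by (simp add: vnorm_def power_divide power_mult_distrib vinner_nonneg)
  also have "\<dots> = (vmean p u * vmean p t + vcov p u t)^2 /
    ((vmean p u * vmean p u + vcov p u u) * (vmean p t * vmean p t + vcov p t t))"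
    using p by (simp add: vinner_eq power_mult_distrib power2_eq_square)
  finally show ?thesis by (simp add: SPH_def)
qed
theorem proposition3:
  fixes \<theta> w :: "nat \<Rightarrow> nat \<Rightarrow> real" and \<nu>hat :: "nat \<Rightarrow> real"
    and m \<nu> \<xi> :: real
  assumes "\<nu> > 0" and "\<xi> > 0"
    and "(\<lambda>p. vmean p (\<theta> p)) \<longlonglongrightarrow> m"
    and "(\<lambda>p. vvar p (\<theta> p)) \<longlonglongrightarrow> \<xi>^2"
    and "(\<lambda>p. vmean p (w p)) \<longlonglongrightarrow> 0"
    and "(\<lambda>p. vvar p (w p)) \<longlonglongrightarrow> \<nu>^2"
    and "(\<lambda>p. vcov p (\<theta> p) (w p)) \<longlonglongrightarrow> 0"
    and "\<nu>hat \<longlonglongrightarrow> \<nu>"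
  shows
    "let \<eta> = (\<lambda>p i. \<theta> p i + w p i);
         c = (\<lambda>p. 1 - (\<nu>hat p)^2 / vvar p (\<eta> p));
         cMSE = (\<lambda>p. vcov p (\<theta> p) (\<eta> p) / vvar p (\<eta> p));
         cSPH = (\<lambda>p. (vmean p (\<eta> p) / vmean p (\<theta> p)) * cMSE p)
     in (\<exists>L. (\<lambda>p. MSE p (\<eta> p) (\<theta> p)) \<longlonglongrightarrow> L \<and>
              (\<lambda>p. MSE p (shrink p (c p) (\<eta> p)) (\<theta> p)) \<longlonglongrightarrow> c_inf \<xi> \<nu> * L)
      \<and> (\<exists>L. (\<lambda>p. SPH p (\<eta> p) (\<theta> p)) \<longlonglongrightarrow> L \<and>
              (\<lambda>p. SPH p (shrink p (c p) (\<eta> p)) (\<theta> p)) \<longlonglongrightarrow> d_inf m \<xi> \<nu> * L)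
      \<and> cMSE \<longlonglongrightarrow> c_inf \<xi> \<nu>
      \<and> (m \<noteq> 0 \<longrightarrow> cSPH \<longlonglongrightarrow> c_inf \<xi> \<nu>)"
proof -
  define a where "a = (\<lambda>p. vmean p (\<theta> p))"
  define b where "b = (\<lambda>p. vmean p (w p))"
  define T where "T = (\<lambda>p. vcov p (\<theta> p) (\<theta> p))"
  define W where "W = (\<lambda>p. vcov p (w p) (w p))"
  define C where "C = (\<lambda>p. vcov p (\<theta> p) (w p))"
  define N where "N = (\<lambda>p. T p + 2 * C p + W p)"
  define \<eta> where "\<eta> = (\<lambda>p i. \<theta> p i + w p i)"
  define c where "c = (\<lambda>p. 1 - (\<nu>hat p)^2 / vvar p (\<eta> p))"
  define S where "S = \<xi>^2 + \<nu>^2"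
  have S0: "S > 0" using assms(1,2) by (simp add: S_def add_pos_pos)
  have a: "a \<longlonglongrightarrow> m" using assms(3) by (simp add: a_def)
  have b: "b \<longlonglongrightarrow> 0" using assms(5) by (simp add: b_def)
  have T: "T \<longlonglongrightarrow> \<xi>^2" using assms(4) by (simp add: T_def vvar_eq)
  have W: "W \<longlonglongrightarrow> \<nu>^2" using assms(6) by (simp add: W_def vvar_eq)
  have C: "C \<longlonglongrightarrow> 0" using assms(7) by (simp add: C_def)
  have N: "N \<longlonglongrightarrow> S" unfolding N_def S_def using T C W
    by (auto intro!: tendsto_eq_intros)
  have ev: "eventually (\<lambda>p. p > 0) sequentially" by (rule eventually_gt_at_top)
  have etam: "vmean p (\<eta> p) = a p + b p" for p by (simp add: \<eta>_def vmean_add a_def b_def)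
  have etaT: "vcov p (\<eta> p) (\<theta> p) = T p + C p" for p
    by (simp add: \<eta>_def vcov_add_left T_def C_def vcov_sym[of p "w p"])
  have etaW: "vcov p (\<eta> p) (w p) = C p + W p" for p
    by (simp add: \<eta>_def vcov_add_left C_def W_def)
  have etaN: "vcov p (\<eta> p) (\<eta> p) = N p" for p
  proof -
    have "vcov p (\<eta> p) (\<eta> p) = vcov p (\<theta> p) (\<eta> p) + vcov p (w p) (\<eta> p)"
      by (simp add: \<eta>_def vcov_add_left)
    also have "\<dots> = vcov p (\<eta> p) (\<theta> p) + vcov p (\<eta> p) (w p)"
      by (simp add: vcov_sym[of p "\<theta> p"] vcov_sym[of p "w p"])
    finally show ?thesis by (simp add: etaT etaW N_def)
  qed
  have cN: "c = (\<lambda>p. 1 - (\<nu>hat p)^2 / N p)" by (simp add: c_def vvar_eq etaN)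
  have c: "c \<longlonglongrightarrow> 1 - \<nu>^2 / S" unfolding cN using N assms(8) S0
    by (auto intro!: tendsto_eq_intros)
  have cinf: "c_inf \<xi> \<nu> = \<xi>^2 / S" using assms(1,2) by (simp add: c_inf_def SNR_def S_def field_simps)
  define sh where "sh = (\<lambda>p. shrink p (c p) (\<eta> p))"
  have shm: "vmean p (sh p) = a p + b p" if "p > 0" for p
    using that by (simp add: sh_def shrink_eq vmean_affine[OF that] etam del: vmean_affine)
  have shT: "vcov p (sh p) (\<theta> p) = c p * (T p + C p)" if "p > 0" for p
    using that by (simp add: sh_def shrink_eq vcov_affine_left etaT)
  have shN: "vcov p (sh p) (sh p) = c p * c p * N p" if "p > 0" for p
  proof -
    have "vcov p (sh p) (sh p) = c p * vcov p (\<eta> p) (sh p)"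
      using that by (simp add: sh_def shrink_eq vcov_affine_left)
    also have "vcov p (\<eta> p) (sh p) = vcov p (sh p) (\<eta> p)" by (rule vcov_sym)
    also have "\<dots> = c p * N p"
      using that by (simp add: sh_def shrink_eq vcov_affine_left etaN)
    finally show ?thesis by simp
  qed
  have e1: "eventually (\<lambda>p. b p ^ 2 + W p = MSE p (\<eta> p) (\<theta> p)) sequentially"
    using ev by eventually_elim (simp add: MSE_eq etam etaN etaT N_def T_def a_def)
  have e2: "eventually (\<lambda>p. b p ^ 2 + c p * c p * N p - 2 * (c p * (T p + C p)) + T p
      = MSE p (sh p) (\<theta> p)) sequentially"
    using ev by eventually_elim (simp add: MSE_eq shm shN shT T_def a_def)
  have e3: "eventually (\<lambda>p. 1 - ((a p + b p) * a p + (T p + C p))^2 /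
      (((a p + b p) * (a p + b p) + N p) * (a p * a p + T p)) = SPH p (\<eta> p) (\<theta> p)) sequentially"
    using ev by eventually_elim (simp add: SPH_eq etam etaN etaT T_def a_def)
  have e4: "eventually (\<lambda>p. 1 - ((a p + b p) * a p + c p * (T p + C p))^2 /
      (((a p + b p) * (a p + b p) + c p * c p * N p) * (a p * a p + T p)) = SPH p (sh p) (\<theta> p)) sequentially"
    using ev by eventually_elim (simp add: SPH_eq shm shN shT T_def a_def)
  have e5: "(\<lambda>p. vcov p (\<theta> p) (\<eta> p) / vvar p (\<eta> p)) = (\<lambda>p. (T p + C p) / N p)"
    by (simp add: vvar_eq etaN vcov_sym[of _ "\<theta> _"] etaT)
  have pos1: "m * m + \<xi>^2 > 0" using assms(2) by (simp add: add_nonneg_pos)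
  have pos2: "m * m + S > 0" using S0 by (simp add: add_nonneg_pos)
  have l1: "(\<lambda>p. b p ^ 2 + W p) \<longlonglongrightarrow> \<nu>^2"
    using b W by (auto intro!: tendsto_eq_intros)
  have l2: "(\<lambda>p. b p ^ 2 + c p * c p * N p - 2 * (c p * (T p + C p)) + T p) \<longlonglongrightarrow>
      0^2 + (1 - \<nu>^2 / S) * (1 - \<nu>^2 / S) * S - 2 * ((1 - \<nu>^2 / S) * (\<xi>^2 + 0)) + \<xi>^2"
    using b c N T C by (intro tendsto_intros)
  have l3: "(\<lambda>p. 1 - ((a p + b p) * a p + (T p + C p))^2 /
      (((a p + b p) * (a p + b p) + N p) * (a p * a p + T p))) \<longlonglongrightarrow>
      1 - ((m + 0) * m + (\<xi>^2 + 0))^2 / (((m + 0) * (m + 0) + S) * (m * m + \<xi>^2))"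
    using a b N T C pos1 pos2 by (intro tendsto_intros) auto
  have l4: "(\<lambda>p. 1 - ((a p + b p) * a p + c p * (T p + C p))^2 /
      (((a p + b p) * (a p + b p) + c p * c p * N p) * (a p * a p + T p))) \<longlonglongrightarrow>
      1 - ((m + 0) * m + (1 - \<nu>^2 / S) * (\<xi>^2 + 0))^2 /
      (((m + 0) * (m + 0) + (1 - \<nu>^2 / S) * (1 - \<nu>^2 / S) * S) * (m * m + \<xi>^2))"
  proof (intro tendsto_intros a b c N T C)
    have "(m * m + (1 - \<nu>^2 / S) * (1 - \<nu>^2 / S) * S) > 0"
    proof -
      have "1 - \<nu>^2 / S = (S - \<nu>^2) / S" using S0 by (simp add: diff_divide_distrib)
      also have "\<dots> = \<xi>^2 / S" by (simp add: S_def)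
      finally have "1 - \<nu>^2 / S = \<xi>^2 / S" .
      then have "1 - \<nu>^2 / S > 0" using S0 assms(2) by simp
      then show ?thesis using S0 by (intro add_nonneg_pos) (auto intro!: mult_pos_pos)
    qed
    then show "((m + 0) * (m + 0) + (1 - \<nu>^2 / S) * (1 - \<nu>^2 / S) * S) * (m * m + \<xi>^2) \<noteq> 0"
      using pos1 by simp
  qed
  have l5: "(\<lambda>p. (T p + C p) / N p) \<longlonglongrightarrow> (\<xi>^2 + 0) / S"
    using T C N S0 by (intro tendsto_intros) auto
  have k: "1 - \<nu>^2 / S = \<xi>^2 / S"
  proof -
    have "1 - \<nu>^2 / S = (S - \<nu>^2) / S" using S0 by (simp add: diff_divide_distrib)
    also have "\<dots> = \<xi>^2 / S" by (simp add: S_def)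
    finally show ?thesis .
  qed
  have rsq: "(r_inf m \<xi>)^2 = \<xi>^2 / (m * m + \<xi>^2)"
    using assms(2) pos1 by (simp add: r_inf_def power_divide field_simps power2_eq_square)
  have isnr: "(1 + (SNR \<xi> \<nu>)^2) = S / \<nu>^2"
    using assms(1) by (simp add: SNR_def S_def field_simps)
  have dinf: "d_inf m \<xi> \<nu> = \<xi>^2 / S + \<xi>^2 / (m * m + \<xi>^2) * \<nu>^2 / S"
    unfolding d_inf_def cinf rsq isnr using S0 assms(1) by (simp add: field_simps)
  have R1: "(\<lambda>p. MSE p (\<eta> p) (\<theta> p)) \<longlonglongrightarrow> \<nu>^2"
    using tendsto_cong[OF e1] l1 by simp
  have V2: "0^2 + (1 - \<nu>^2 / S) * (1 - \<nu>^2 / S) * S - 2 * ((1 - \<nu>^2 / S) * (\<xi>^2 + 0)) + \<xi>^2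
     = c_inf \<xi> \<nu> * \<nu>^2"
  proof -
    have nu: "\<nu>^2 = S - \<xi>^2" by (simp add: S_def)
    show ?thesis unfolding k cinf nu using S0 by (simp add: field_simps power2_eq_square)
  qed
  have R2: "(\<lambda>p. MSE p (sh p) (\<theta> p)) \<longlonglongrightarrow> c_inf \<xi> \<nu> * \<nu>^2"
    using tendsto_cong[OF e2] l2 V2 by simp
  define L3 where "L3 = 1 - ((m + 0) * m + (\<xi>^2 + 0))^2 / (((m + 0) * (m + 0) + S) * (m * m + \<xi>^2))"
  have R3: "(\<lambda>p. SPH p (\<eta> p) (\<theta> p)) \<longlonglongrightarrow> L3"
    using tendsto_cong[OF e3] l3 unfolding L3_def by simp
  have V4: "1 - ((m + 0) * m + (1 - \<nu>^2 / S) * (\<xi>^2 + 0))^2 /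
      (((m + 0) * (m + 0) + (1 - \<nu>^2 / S) * (1 - \<nu>^2 / S) * S) * (m * m + \<xi>^2))
      = d_inf m \<xi> \<nu> * L3"
  proof -
    have nu: "\<nu>^2 = S - \<xi>^2" by (simp add: S_def)
    define A where "A = m * m + \<xi>^2"
    define x where "x = \<xi>^2 / S"
    have A0: "A > 0" using pos1 by (simp add: A_def)
    have x0: "x > 0" using S0 assms(2) by (simp add: x_def)
    have h1: "(1 - \<nu>^2 / S) * (1 - \<nu>^2 / S) * S = x * \<xi>^2"
      unfolding k x_def using S0 by (simp add: field_simps power2_eq_square)
    have pm: "m * m + x * \<xi>^2 > 0" using x0 assms(2) by (intro add_nonneg_pos) auto
    have "1 - ((m + 0) * m + (1 - \<nu>^2 / S) * (\<xi>^2 + 0))^2 /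
      (((m + 0) * (m + 0) + (1 - \<nu>^2 / S) * (1 - \<nu>^2 / S) * S) * (m * m + \<xi>^2))
      = 1 - (m * m + x * \<xi>^2)^2 / ((m * m + x * \<xi>^2) * A)"
      unfolding h1 by (simp add: k x_def A_def)
    also have "\<dots> = 1 - (m * m + x * \<xi>^2) / A"
      using pm A0 by (simp add: power2_eq_square)
    also have "\<dots> = \<xi>^2 * (1 - x) / A"
      using A0 by (simp add: field_simps A_def)
    also have "1 - x = \<nu>^2 / S" unfolding x_def k[symmetric] by simp
    finally have lhs: "1 - ((m + 0) * m + (1 - \<nu>^2 / S) * (\<xi>^2 + 0))^2 /
      (((m + 0) * (m + 0) + (1 - \<nu>^2 / S) * (1 - \<nu>^2 / S) * S) * (m * m + \<xi>^2))
      = \<xi>^2 * (\<nu>^2 / S) / A" .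
    have Anu: "A + \<nu>^2 > 0" using A0 by (simp add: add_pos_nonneg)
    have L3e: "L3 = \<nu>^2 / (A + \<nu>^2)"
    proof -
      have "L3 = 1 - A^2 / ((A + \<nu>^2) * A)" unfolding L3_def A_def S_def by (simp add: algebra_simps)
      also have "\<dots> = 1 - A / (A + \<nu>^2)" using A0 by (simp add: power2_eq_square)
      also have "\<dots> = \<nu>^2 / (A + \<nu>^2)" using Anu
        by (simp add: field_simps)
      finally show ?thesis .
    qed
    have D: "d_inf m \<xi> \<nu> = \<xi>^2 * (A + \<nu>^2) / (S * A)"
      unfolding dinf A_def[symmetric] using S0 A0 by (simp add: field_simps)
    have r: "\<xi>^2 * (A + \<nu>^2) / (S * A) * (\<nu>^2 / (A + \<nu>^2)) = \<xi>^2 * \<nu>^2 / (S * A)"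
    proof -
      have gen: "\<And>B x y z :: real. B \<noteq> 0 \<Longrightarrow> x * B / z * (y / B) = x * y / z" by simp
      show ?thesis using Anu by (intro gen) simp
    qed
    have l: "\<xi>^2 * (\<nu>^2 / S) / A = \<xi>^2 * \<nu>^2 / (S * A)" by (simp add: field_simps)
    show ?thesis unfolding lhs L3e D r l ..
  qed
  have R4: "(\<lambda>p. SPH p (sh p) (\<theta> p)) \<longlonglongrightarrow> d_inf m \<xi> \<nu> * L3"
    using tendsto_cong[OF e4] l4 V4 by simp
  have R5: "(\<lambda>p. vcov p (\<theta> p) (\<eta> p) / vvar p (\<eta> p)) \<longlonglongrightarrow> c_inf \<xi> \<nu>"
    unfolding e5 cinf using l5 by simp
  have R6: "(\<lambda>p. (vmean p (\<eta> p) / vmean p (\<theta> p)) * (vcov p (\<theta> p) (\<eta> p) / vvar p (\<eta> p)))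
     \<longlonglongrightarrow> c_inf \<xi> \<nu>" if m0: "m \<noteq> 0"
  proof -
    have "(\<lambda>p. ((a p + b p) / a p) * ((T p + C p) / N p)) \<longlonglongrightarrow> ((m + 0) / m) * ((\<xi>^2 + 0) / S)"
      using a b T C N S0 m0 by (intro tendsto_intros) auto
    moreover have "vcov p (\<theta> p) (\<eta> p) / vvar p (\<eta> p) = (T p + C p) / N p" for p
      using e5 by (rule fun_cong)
    ultimately show ?thesis using m0 unfolding etam cinf by (simp add: a_def)
  qed
  show ?thesis unfolding Let_def
    using R1 R2 R3 R4 R5 R6 unfolding sh_def c_def \<eta>_def by blast
qed

end
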